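(* Let $X$ be the Coxeter realization of a building of triangle type $(2,k,m)$ with $k\ge3$ and $m\ge6$. Let $v,v'$ be two vertices of type $\mathbf{k}$ adjacent to a vertex $w$ of type $\mathbf{2}$. Then $w$ is the unique vertex of type $\mathbf 2$ adjacent to both $v$ and $v'$. Moreover, if $v,v'$ are both adjacent to a vertex $u$ of type $\mathbf m$, then $w$ and $u$ are adjacent.
   Context: Buildings have finite thickness; the Coxeter realization is the simplicial complex whose apartments are Coxeter complexes of the triangle group. A vertex is of type $\mathbf{j}$ ($j\in\{2,k,m\}$) if its stabilizer in an apartment is dihedral of order $2j$, equivalently its link is a bipartite graph of girth $2j$; when $k=m$ the two types $\mathbf k$ and $\mathbf m$ are still distinguished (as the two types of vertices of a chamber other than type $\mathbf 2$). *)

theory Defs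
  imports Main
begin

text \<open>Elements are represented by words over {0,1,2}; group equality is the
  congruence generated by the Coxeter relators.\<close>

definition braid :: "nat \<Rightarrow> nat \<Rightarrow> nat \<Rightarrow> nat list" where
  "braid a b n = concat (replicate n [a, b])"

definition relators :: "nat \<Rightarrow> nat \<Rightarrow> nat list set" where
  "relators k m = {[0,0], [1,1], [2,2], braid 0 1 2, braid 1 2 k, braid 0 2 m}"

inductive coxeq :: "nat \<Rightarrow> nat \<Rightarrow> nat list \<Rightarrow> nat list \<Rightarrow> bool" for k m where
  refl: "coxeq k m u u"
| sym: "coxeq k m u v \<Longrightarrow> coxeq k m v u"
| trans: "coxeq k m u v \<Longrightarrow> coxeq k m v w \<Longrightarrow> coxeq k m u w"
| rel: "r \<in> relators k m \<Longrightarrow> coxeq k m (u @ r @ v) (u @ v)"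

definition cox_len :: "nat \<Rightarrow> nat \<Rightarrow> nat list \<Rightarrow> nat" where
  "cox_len k m w = (LEAST n. \<exists>u. set u \<subseteq> {0,1,2} \<and> length u = n \<and> coxeq k m u w)"

text \<open>A building of type (2,k,m) as a W-metric space (Abramenko--Brown, Def. 5.1),
  with chambers of type 'c and Weyl distance delta, required to be thick with
  finite thickness (every panel is finite and contains at least 3 chambers).\<close>
definition building :: "nat \<Rightarrow> nat \<Rightarrow> ('c \<Rightarrow> 'c \<Rightarrow> nat list) \<Rightarrow> bool" where
  "building k m \<delta> \<longleftrightarrow>
     (\<forall>C D. set (\<delta> C D) \<subseteq> {0,1,2}) \<and>
     (\<forall>C D. coxeq k m (\<delta> C D) [] \<longleftrightarrow> C = D) \<and>
     (\<forall>C D C' s. s < 3 \<longrightarrow> coxeq k m (\<delta> C' C) [s] \<longrightarrow>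
        (coxeq k m (\<delta> C' D) (s # \<delta> C D) \<or> coxeq k m (\<delta> C' D) (\<delta> C D)) \<and>
        (cox_len k m (s # \<delta> C D) = cox_len k m (\<delta> C D) + 1 \<longrightarrow>
           coxeq k m (\<delta> C' D) (s # \<delta> C D))) \<and>
     (\<forall>C D s. s < 3 \<longrightarrow>
        (\<exists>C'. coxeq k m (\<delta> C' C) [s] \<and> coxeq k m (\<delta> C' D) (s # \<delta> C D))) \<and>
     (\<forall>C s. s < 3 \<longrightarrow> finite {D. coxeq k m (\<delta> C D) [s]} \<and>
        card {D. coxeq k m (\<delta> C D) [s]} \<ge> 2)"

text \<open>The J-residue of chamber C; vertices of the Coxeter realization are the
  residues of rank 2.  Type 2 = {0,1}, type k = {1,2}, type m = {0,2}.\<close>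
definition residue :: "nat \<Rightarrow> nat \<Rightarrow> ('c \<Rightarrow> 'c \<Rightarrow> nat list) \<Rightarrow> nat set \<Rightarrow> 'c \<Rightarrow> 'c set" where
  "residue k m \<delta> J C = {D. \<exists>u. set u \<subseteq> J \<and> coxeq k m (\<delta> C D) u}"

definition vertex_of_type :: "nat \<Rightarrow> nat \<Rightarrow> ('c \<Rightarrow> 'c \<Rightarrow> nat list) \<Rightarrow> nat set \<Rightarrow> 'c set \<Rightarrow> bool" where
  "vertex_of_type k m \<delta> J x \<longleftrightarrow> (\<exists>C. x = residue k m \<delta> J C)"

abbreviation "type2 \<equiv> {0,1::nat}"
abbreviation "typek \<equiv> {1,2::nat}"
abbreviation "typem \<equiv> {0,2::nat}"

definition adjacent :: "'c set \<Rightarrow> 'c set \<Rightarrow> bool" where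
  "adjacent x y \<longleftrightarrow> x \<noteq> y \<and> x \<inter> y \<noteq> {}"

end

theory Submission
  imports Defs Complex_Main
begin


lemma cx_refl: "coxeq k m u u" by (rule coxeq.refl)
lemma cx_sym: "coxeq k m u v \<Longrightarrow> coxeq k m v u" by (rule coxeq.sym)
lemma cx_trans[trans]: "coxeq k m u v \<Longrightarrow> coxeq k m v w \<Longrightarrow> coxeq k m u w" by (rule coxeq.trans)

lemma cx_cong: "coxeq k m u v \<Longrightarrow> coxeq k m (p @ u @ q) (p @ v @ q)"
proof (induction rule: coxeq.induct)
  case (rel r u v)
  have "coxeq k m ((p@u) @ r @ (v@q)) ((p@u) @ (v@q))" using rel by (rule coxeq.rel)
  then show ?case by simp
qed (auto intro: coxeq.intros)

lemma cx_app: "coxeq k m u u' \<Longrightarrow> coxeq k m v v' \<Longrightarrow> coxeq k m (u@v) (u'@v')"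
proof -
  assume a: "coxeq k m u u'" and b: "coxeq k m v v'"
  have "coxeq k m ([] @ u @ v) ([] @ u' @ v)" using cx_cong[OF a] by blast
  moreover have "coxeq k m (u' @ v @ []) (u' @ v' @ [])" using cx_cong[OF b] by blast
  ultimately show ?thesis by (auto intro: cx_trans)
qed

lemma cx_rel0: "r \<in> relators k m \<Longrightarrow> coxeq k m r []"
  using coxeq.rel[of r k m "[]" "[]"] by simp

lemma cx_ss: "s < 3 \<Longrightarrow> coxeq k m (p @ s # s # q) (p @ q)"
proof -
  assume "s < 3"
  then have "[s,s] \<in> relators k m" unfolding relators_def by (auto simp: less_Suc_eq)
  from coxeq.rel[OF this, of p q] show ?thesis by simp
qed

lemma braid_Suc: "braid a b (Suc n) = [a,b] @ braid a b n" by (simp add: braid_def)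
lemma braid_Suc': "braid a b (Suc n) = braid a b n @ [a,b]"
  by (simp add: braid_def replicate_append_same[symmetric] del: replicate_append_same)
lemma braid_0[simp]: "braid a b 0 = []" by (simp add: braid_def)

lemma braid_swap: "b # braid a b n = braid b a n @ [b]"
  by (induction n) (auto simp: braid_Suc)

lemma rev_braid: "rev (braid a b n) = braid b a n"
proof (induction n)
  case (Suc n)
  have "rev (braid a b (Suc n)) = braid b a n @ [b,a]" using Suc by (simp add: braid_Suc)
  also have "\<dots> = braid b a (Suc n)" by (rule braid_Suc'[symmetric])
  finally show ?case .
qed simp

lemma cx_braid_rev:
  assumes "a < 3" "b < 3" "coxeq k m (braid a b n) []"
  shows "coxeq k m (braid b a n) []"
proof -
  have "coxeq k m ([b] @ braid a b n @ [b]) ([b] @ [] @ [b])" by (rule cx_cong[OF assms(3)])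
  also have "coxeq k m ([b] @ [] @ [b]) []" using cx_ss[OF assms(2), of k m "[]" "[]"] by simp
  finally have 1: "coxeq k m (b # braid a b n @ [b]) []" by simp
  have "b # braid a b n @ [b] = braid b a n @ [b, b]" using braid_swap[of b a n] by simp
  moreover have "coxeq k m (braid b a n @ [b,b]) (braid b a n)"
    using cx_ss[OF assms(2), of k m "braid b a n" "[]"] by simp
  ultimately show ?thesis using 1 by (metis cx_sym cx_trans)
qed

lemma cx_rev_rel: "r \<in> relators k m \<Longrightarrow> coxeq k m (rev r) []"
proof -
  assume r: "r \<in> relators k m"
  have b1: "coxeq k m (braid 0 1 2) []" "coxeq k m (braid 1 2 k) []" "coxeq k m (braid 0 2 m) []"
    by (auto intro!: cx_rel0 simp: relators_def)
  have s: "coxeq k m [s,s] []" if "s < 3" for s using cx_ss[OF that, of k m "[]" "[]"] by simp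
  from r show ?thesis unfolding relators_def
    using cx_braid_rev[OF _ _ b1(1)] cx_braid_rev[OF _ _ b1(2)] cx_braid_rev[OF _ _ b1(3)] s
    by (auto simp: rev_braid)
qed

lemma cx_rev: "coxeq k m u v \<Longrightarrow> coxeq k m (rev u) (rev v)"
proof (induction rule: coxeq.induct)
  case (rel r u v)
  have "coxeq k m (rev v @ rev r @ rev u) (rev v @ [] @ rev u)"
    by (rule cx_cong[OF cx_rev_rel[OF rel]])
  then show ?case by simp
qed (auto intro: coxeq.intros)



lemma cx_ss': "s < 3 \<Longrightarrow> coxeq k m (p @ q) (p @ s # s # q)"
  by (rule cx_sym, rule cx_ss)

lemma cx_10: "coxeq k m [1,0] [0,1]"
proof -
  have r: "coxeq k m [0,1,0,1] []" using cx_rel0[of "braid 0 1 2" k m]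
    by (simp add: relators_def braid_def numeral_2_eq_2)
  have "coxeq k m [1,0] ([0,0,1,0])" using cx_ss'[of 0 k m "[]" "[1,0]"] by simp
  also have "coxeq k m \<dots> ([0,0,1,0,1,1])" using cx_ss'[of 1 k m "[0,0,1,0]" "[]"] by simp
  also have "coxeq k m \<dots> ([0] @ [] @ [1])" using cx_cong[OF r, of "[0]" "[1]"] by simp
  finally show ?thesis by simp
qed

lemma cx_010: "coxeq k m [0,1,0] [1]"
proof -
  have r: "coxeq k m [0,1,0,1] []" using cx_rel0[of "braid 0 1 2" k m]
    by (simp add: relators_def braid_def numeral_2_eq_2)
  have "coxeq k m [0,1,0] ([0,1,0,1,1])" using cx_ss'[of 1 k m "[0,1,0]" "[]"] by simp
  also have "coxeq k m \<dots> ([] @ [] @ [1])" using cx_cong[OF r, of "[]" "[1]"] by simp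
  finally show ?thesis by simp
qed

lemma CF01: "set p \<subseteq> {0,1} \<Longrightarrow>
  coxeq k m p [] \<or> coxeq k m p [0] \<or> coxeq k m p [1] \<or> coxeq k m p [0,1]"
proof (induction p rule: rev_induct)
  case Nil then show ?case by (auto intro: cx_refl)
next
  case (snoc s p)
  then have IH: "coxeq k m p [] \<or> coxeq k m p [0] \<or> coxeq k m p [1] \<or> coxeq k m p [0,1]"
    and s: "s = 0 \<or> s = 1" by auto
  have ap: "coxeq k m (p @ [s]) (q @ [s])" if "coxeq k m p q" for q
    using cx_app[OF that cx_refl] .
  have e1: "coxeq k m [0,0] []" "coxeq k m [1,1] []" "coxeq k m [0,1,1] [0]"
    using cx_ss[of 0 k m "[]" "[]"] cx_ss[of 1 k m "[]" "[]"] cx_ss[of 1 k m "[0]" "[]"] by auto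
  have c1: "coxeq k m (p @ [s]) [s]" if "coxeq k m p []" using ap[OF that] by simp
  have c2: "coxeq k m (p @ [s]) []" if "coxeq k m p [0]" "s = 0" using ap[OF that(1)] that(2) e1 by (auto intro: cx_trans)
  have c3: "coxeq k m (p @ [s]) [0,1]" if "coxeq k m p [1]" "s = 0" using ap[OF that(1)] that(2) cx_10 by (auto intro: cx_trans)
  have c4: "coxeq k m (p @ [s]) [1]" if "coxeq k m p [0,1]" "s = 0" using ap[OF that(1)] that(2) cx_010 by (auto intro: cx_trans)
  have c5: "coxeq k m (p @ [s]) [0,1]" if "coxeq k m p [0]" "s = 1" using ap[OF that(1)] that(2) by auto
  have c6: "coxeq k m (p @ [s]) []" if "coxeq k m p [1]" "s = 1" using ap[OF that(1)] that(2) e1 by (auto intro: cx_trans)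
  have c7: "coxeq k m (p @ [s]) [0]" if "coxeq k m p [0,1]" "s = 1" using ap[OF that(1)] that(2) e1 by (auto intro: cx_trans)
  from IH s show ?case using c1 c2 c3 c4 c5 c6 c7 by blast
qed

abbreviation rp :: "nat \<Rightarrow> nat list" where "rp j \<equiv> braid 1 2 j"

lemma rp_k: "coxeq k m (rp k) []"
  by (rule cx_rel0) (simp add: relators_def)

lemma cx_2: "0 < k \<Longrightarrow> coxeq k m [2] (rp (k - 1) @ [1])"
proof -
  assume "0 < k"
  then have kk: "rp k = rp (k-1) @ [1,2]" using braid_Suc'[of 1 2 "k-1"] by simp
  have "coxeq k m (rp (k-1) @ [1]) (rp (k-1) @ [1] @ 2 # 2 # [])" using cx_ss'[of 2 k m "rp (k-1) @ [1]" "[]"] by simp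
  also have "rp (k-1) @ [1] @ 2 # 2 # [] = rp k @ [2]" using kk by simp
  also have "coxeq k m (rp k @ [2]) ([] @ [2])" using cx_app[OF rp_k cx_refl] .
  finally show ?thesis by (simp add: cx_sym)
qed

lemma CF12: "0 < k \<Longrightarrow> set x \<subseteq> {1,2} \<Longrightarrow>
  \<exists>j<k. coxeq k m x (rp j) \<or> coxeq k m x (rp j @ [1])"
proof (induction x rule: rev_induct)
  case Nil then show ?case by (intro exI[of _ 0]) (auto intro: cx_refl)
next
  case (snoc s x)
  then obtain j where j: "j < k" and IH: "coxeq k m x (rp j) \<or> coxeq k m x (rp j @ [1])"
    and s: "s = 1 \<or> s = 2" by auto
  have ap: "coxeq k m (x @ [s]) (q @ [s])" if "coxeq k m x q" for q
    using cx_app[OF that cx_refl] .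
  show ?case
  proof (cases "coxeq k m x (rp j)")
    case True
    show ?thesis
    proof (cases "s = 1")
      case True with ap[OF \<open>coxeq k m x (rp j)\<close>] j show ?thesis by auto
    next
      case False
      with s have s2: "s = 2" by simp
      show ?thesis
      proof (cases j)
        case 0
        then have "coxeq k m (x @ [s]) [2]" using ap[OF \<open>coxeq k m x (rp j)\<close>] s2 by simp
        also have "coxeq k m [2] (rp (k-1) @ [1])" using cx_2 snoc by simp
        finally show ?thesis using snoc by (intro exI[of _ "k-1"]) auto
      next
        case (Suc j')
        have "coxeq k m (x @ [s]) (rp j' @ [1] @ 2 # 2 # [])"
          using ap[OF \<open>coxeq k m x (rp j)\<close>] s2 Suc by (simp add: braid_Suc')
        also have "coxeq k m \<dots> (rp j' @ [1] @ [])" using cx_ss[of 2 k m "rp j' @ [1]" "[]"] by simp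
        finally show ?thesis using j Suc by (intro exI[of _ j']) auto
      qed
    qed
  next
    case False
    with IH have h: "coxeq k m x (rp j @ [1])" by simp
    show ?thesis
    proof (cases "s = 1")
      case True
      have "coxeq k m (x @ [s]) (rp j @ 1 # 1 # [])" using ap[OF h] True by simp
      also have "coxeq k m \<dots> (rp j @ [])" using cx_ss[of 1 k m "rp j" "[]"] by simp
      finally show ?thesis using j by auto
    next
      case False
      with s have s2: "s = 2" by simp
      have e: "coxeq k m (x @ [s]) (rp (Suc j))" using ap[OF h] s2 by (simp add: braid_Suc')
      show ?thesis
      proof (cases "Suc j < k")
        case True with e show ?thesis by blast
      next
        case False
        with j have "Suc j = k" by simp
        with e rp_k have "coxeq k m (x @ [s]) (rp 0)" by (auto intro: cx_trans)
        with snoc show ?thesis by (intro exI[of _ 0]) auto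
      qed
    qed
  qed
qed



definition L2 :: "real \<Rightarrow> real \<times> real \<Rightarrow> real \<times> real" where
  "L2 c = (\<lambda>(a,b). ((4*c^2-1)*a - 2*c*b, 2*c*a - b))"

lemma sin_rec: "sin (x + t) = 2 * cos t * sin x - sin ((x::real) - t)"
  by (simp add: sin_add sin_diff algebra_simps)

lemma alg1: fixes s c a b a' b' S0 S1 Sm :: real
  assumes "s*a' = S1*a - S0*b" "s*b' = S0*a - Sm*b" "S1 = 2*c*S0 - Sm"
  shows "s*((4*c^2-1)*a' - 2*c*b') = (2*c*(2*c*S1 - S0) - S1)*a - (2*c*S1 - S0)*b"
    "s*(2*c*a' - b') = (2*c*S1 - S0)*a - S1*b"
  using assms by algebra+

lemma L2_pow:
  "sin t * fst ((L2 (cos t) ^^ j) (a,b)) = sin (2*j*t + t) * a - sin (2*j*t) * b \<and>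
   sin t * snd ((L2 (cos t) ^^ j) (a,b)) = sin (2*j*t) * a - sin (2*j*t - t) * b"
proof (induction j)
  case 0
  then show ?case by simp
next
  case (Suc j)
  define u where "u = 2*real j*t"
  obtain a' b' where ab: "(L2 (cos t) ^^ j) (a,b) = (a',b')" by fastforce
  from Suc ab have h1: "sin t * a' = sin (u + t) * a - sin u * b"
    and h2: "sin t * b' = sin u * a - sin (u - t) * b" by (simp_all add: u_def)
  have e: "2*real (Suc j)*t + t = u + t + t + t" "2*real (Suc j)*t = u + t + t"
    "2*real (Suc j)*t - t = u + t" by (simp_all add: u_def algebra_simps)
  have r1: "sin (u + t + t) = 2 * cos t * sin (u+t) - sin u"
    using sin_rec[of "u+t" t] by (simp only: add_diff_cancel_right')
  have r2: "sin (u + t + t + t) = 2 * cos t * sin (u+t+t) - sin (u+t)"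
    using sin_rec[of "u+t+t" t] by (simp only: add_diff_cancel_right')
  have r0: "sin (u + t) = 2 * cos t * sin u - sin (u-t)"
    using sin_rec[of u t] by simp
  have st: "(L2 (cos t) ^^ Suc j) (a,b) = ((4*(cos t)^2-1)*a' - 2*cos t*b', 2*cos t*a' - b')"
    using ab by (simp add: L2_def)
  note A = alg1[OF h1 h2 r0]
  show ?case unfolding st e fst_conv snd_conv r2 r1 A by (simp add: ac_simps)
qed

lemma L2_id:
  assumes "2 \<le> n"
  shows "(L2 (cos (pi/n)) ^^ n) v = v"
proof -
  obtain a b where v: "v = (a,b)" by fastforce
  define t where "t = pi / n"
  have n0: "real n > 0" using assms by simp
  have tp: "0 < t" "t < pi" using assms by (auto simp: t_def field_simps)
  then have s: "sin t > 0" by (rule sin_gt_zero)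
  have e: "2*real n*t = 2*pi" using n0 by (simp add: t_def)
  have x1: "sin (2*pi + t) = sin t" by (simp add: sin_add)
  have x2: "sin (2*pi - t) = - sin t" by (simp add: sin_diff)
  from L2_pow[of t n a b] have
    "sin t * fst ((L2 (cos t) ^^ n) (a,b)) = sin t * a"
    "sin t * snd ((L2 (cos t) ^^ n) (a,b)) = sin t * b"
    unfolding e x1 x2 by simp_all
  with s have "fst ((L2 (cos t) ^^ n) (a,b)) = a" "snd ((L2 (cos t) ^^ n) (a,b)) = b" by simp_all
  then show ?thesis unfolding v t_def by (simp add: prod_eq_iff)
qed

type_synonym v3 = "real \<times> real \<times> real"

definition sg :: "real \<Rightarrow> real \<Rightarrow> nat \<Rightarrow> v3 \<Rightarrow> v3" where
  "sg ck cm s = (\<lambda>(x,y,z).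
     if s = 0 then (-x + 2*cm*z, y, z)
     else if s = 1 then (x, -y + 2*ck*z, z)
     else if s = 2 then (x, y, -z + 2*cm*x + 2*ck*y)
     else (x,y,z))"

lemma sg0: "sg ck cm 0 (x,y,z) = (-x + 2*cm*z, y, z)" by (simp add: sg_def)
lemma sg1: "sg ck cm (Suc 0) (x,y,z) = (x, -y + 2*ck*z, z)" by (simp add: sg_def)
lemma sg2: "sg ck cm 2 (x,y,z) = (x, y, -z + 2*cm*x + 2*ck*y)" by (simp add: sg_def)
lemma sg3: "s \<ge> 3 \<Longrightarrow> sg ck cm s v = v" by (cases v) (auto simp: sg_def)

fun rep :: "real \<Rightarrow> real \<Rightarrow> nat list \<Rightarrow> v3 \<Rightarrow> v3" where
  "rep ck cm [] = id"
| "rep ck cm (s # w) = sg ck cm s \<circ> rep ck cm w"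

lemma rep_append: "rep ck cm (u @ v) = rep ck cm u \<circ> rep ck cm v"
  by (induction u) auto

lemma rep_braid: "rep ck cm (braid a b n) = (sg ck cm a \<circ> sg ck cm b) ^^ n"
  by (induction n) (auto simp: braid_Suc)

lemma sg_invol: "sg ck cm s (sg ck cm s v) = v"
  by (cases v) (auto simp: sg_def)

lemma E12:
  fixes ck cm :: real
  assumes "ck^2 \<noteq> 1"
  defines "o2 \<equiv> cm / (1 - ck^2)"
  shows "((sg ck cm 1 \<circ> sg ck cm 2) ^^ j) (x, x*(ck*o2) + a, x*o2 + b)
     = (x, x*(ck*o2) + fst ((L2 ck ^^ j) (a,b)), x*o2 + snd ((L2 ck ^^ j) (a,b)))"
proof (induction j)
  case 0 then show ?case by simp
next
  case (Suc j)
  obtain a' b' where ab: "(L2 ck ^^ j) (a,b) = (a',b')" by fastforce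
  have o: "o2 * (1 - ck^2) = cm" using assms by (simp add: o2_def)
  have o': "cm = o2 - o2*ck*ck" using o by (simp add: algebra_simps power2_eq_square)
  have z: "-(x*o2+b') + 2*cm*x + 2*ck*(x*(ck*o2)+a') = x*o2 + (-b' + 2*ck*a')"
    unfolding o' by (simp add: algebra_simps)
  have "sg ck cm 2 (x, x*(ck*o2) + a', x*o2 + b') = (x, x*(ck*o2) + a', x*o2 + (-b' + 2*ck*a'))"
    using z by (simp add: sg2)
  moreover have "sg ck cm 1 (x, x*(ck*o2) + a', x*o2 + (-b' + 2*ck*a'))
     = (x, x*(ck*o2) + (-a' + 2*ck*(-b' + 2*ck*a')), x*o2 + (-b' + 2*ck*a'))"
    by (simp add: sg1[simplified] algebra_simps)
  ultimately show ?case using Suc ab by (simp add: L2_def algebra_simps power2_eq_square)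
qed

lemma E02:
  fixes ck cm :: real
  assumes "cm^2 \<noteq> 1"
  defines "p2 \<equiv> ck / (1 - cm^2)"
  shows "((sg ck cm 0 \<circ> sg ck cm 2) ^^ j) (y*(cm*p2) + a, y, y*p2 + b)
     = (y*(cm*p2) + fst ((L2 cm ^^ j) (a,b)), y, y*p2 + snd ((L2 cm ^^ j) (a,b)))"
proof (induction j)
  case 0 then show ?case by simp
next
  case (Suc j)
  obtain a' b' where ab: "(L2 cm ^^ j) (a,b) = (a',b')" by fastforce
  have o: "p2 * (1 - cm^2) = ck" using assms by (simp add: p2_def)
  have o': "ck = p2 - p2*cm*cm" using o by (simp add: algebra_simps power2_eq_square)
  have z: "-(y*p2+b') + 2*cm*(y*(cm*p2)+a') + 2*ck*y = y*p2 + (-b' + 2*cm*a')"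
    unfolding o' by (simp add: algebra_simps)
  have "sg ck cm 2 (y*(cm*p2) + a', y, y*p2 + b') = (y*(cm*p2) + a', y, y*p2 + (-b' + 2*cm*a'))"
    using z by (simp add: sg2)
  moreover have "sg ck cm 0 (y*(cm*p2) + a', y, y*p2 + (-b' + 2*cm*a'))
     = (y*(cm*p2) + (-a' + 2*cm*(-b' + 2*cm*a')), y, y*p2 + (-b' + 2*cm*a'))"
    by (simp add: sg0 algebra_simps)
  ultimately show ?case using Suc ab by (simp add: L2_def algebra_simps power2_eq_square)
qed

lemma cos_sq_ne1: "2 \<le> n \<Longrightarrow> (cos (pi / real n))^2 \<noteq> 1"
proof -
  assume "2 \<le> n"
  then have "0 < pi / real n" "pi / real n < pi" by (auto simp: field_simps)
  then have "sin (pi / real n) > 0" by (rule sin_gt_zero)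
  then have "(sin (pi / real n))^2 \<noteq> 0" by simp
  then show ?thesis using sin_cos_squared_add[of "pi / real n"] by linarith
qed

lemma rel12:
  assumes "2 \<le> k"
  shows "((sg (cos (pi/k)) cm 1 \<circ> sg (cos (pi/k)) cm 2) ^^ k) v = v"
proof -
  define ck where "ck = cos (pi/k)"
  have c: "ck^2 \<noteq> 1" using cos_sq_ne1[OF assms] by (simp add: ck_def)
  define o2 where "o2 = cm / (1 - ck^2)"
  obtain x y z where v: "v = (x,y,z)" by (cases v) auto
  have vv: "v = (x, x*(ck*o2) + (y - x*(ck*o2)), x*o2 + (z - x*o2))" using v by simp
  show ?thesis
    apply (subst (1 2) vv)
    unfolding ck_def[symmetric]
    using E12[OF c, where cm=cm and j=k and x=x and a="y - x*(ck*o2)" and b="z - x*o2"] L2_id[OF assms] unfolding o2_def ck_def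
    by simp
qed

lemma rel02:
  assumes "2 \<le> m"
  shows "((sg ck (cos (pi/m)) 0 \<circ> sg ck (cos (pi/m)) 2) ^^ m) v = v"
proof -
  define cm where "cm = cos (pi/m)"
  have c: "cm^2 \<noteq> 1" using cos_sq_ne1[OF assms] by (simp add: cm_def)
  define p2 where "p2 = ck / (1 - cm^2)"
  obtain x y z where v: "v = (x,y,z)" by (cases v) auto
  have vv: "v = (y*(cm*p2) + (x - y*(cm*p2)), y, y*p2 + (z - y*p2))" using v by simp
  show ?thesis
    apply (subst (1 2) vv)
    unfolding cm_def[symmetric]
    using E02[OF c, where ck=ck and j=m and y=y and a="x - y*(cm*p2)" and b="z - y*p2"] L2_id[OF assms] unfolding p2_def cm_def
    by simp
qed



lemma sg1': "sg ck cm 1 (x,y,z) = (x, -y + 2*ck*z, z)" by (simp add: sg_def)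

lemma rep_rel:
  assumes "r \<in> relators k m" "2 \<le> k" "2 \<le> m"
  shows "rep (cos (pi/k)) (cos (pi/m)) r = id"
proof -
  let ?ck = "cos (pi/k)" and ?cm = "cos (pi/m)"
  have ss: "rep ?ck ?cm [s,s] = id" for s by (auto simp: sg_invol)
  have b01: "rep ?ck ?cm (braid 0 1 2) = id"
    unfolding rep_braid by (auto simp: numeral_2_eq_2 sg0 sg1' sg1 fun_eq_iff)
  have b12: "rep ?ck ?cm (braid 1 2 k) = id"
    unfolding rep_braid using rel12[OF assms(2)] by (auto simp: fun_eq_iff)
  have b02: "rep ?ck ?cm (braid 0 2 m) = id"
    unfolding rep_braid using rel02[OF assms(3)] by (auto simp: fun_eq_iff)
  from assms(1) show ?thesis unfolding relators_def using ss b01 b12 b02 by auto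
qed

lemma rep_cx:
  assumes "coxeq k m u v" "2 \<le> k" "2 \<le> m"
  shows "rep (cos (pi/k)) (cos (pi/m)) u = rep (cos (pi/k)) (cos (pi/m)) v"
  using assms(1)
proof (induction rule: coxeq.induct)
  case (rel r u v)
  then show ?case using rep_rel[OF rel assms(2,3)] by (simp add: rep_append)
qed auto

definition add3 :: "v3 \<Rightarrow> v3 \<Rightarrow> v3" where
  "add3 v w = (fst v + fst w, fst (snd v) + fst (snd w), snd (snd v) + snd (snd w))"
definition scl3 :: "real \<Rightarrow> v3 \<Rightarrow> v3" where
  "scl3 r v = (r * fst v, r * fst (snd v), r * snd (snd v))"

lemma sg_add: "sg ck cm s (add3 v w) = add3 (sg ck cm s v) (sg ck cm s w)"
  by (cases v; cases w) (auto simp: sg_def add3_def algebra_simps)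
lemma sg_scl: "sg ck cm s (scl3 r v) = scl3 r (sg ck cm s v)"
  by (cases v) (auto simp: sg_def scl3_def algebra_simps)

lemma rep_add: "rep ck cm w (add3 u v) = add3 (rep ck cm w u) (rep ck cm w v)"
  by (induction w) (auto simp: sg_add)
lemma rep_scl: "rep ck cm w (scl3 r v) = scl3 r (rep ck cm w v)"
  by (induction w) (auto simp: sg_scl)

lemma rep_lin: "rep ck cm w (x,y,z) =
  add3 (scl3 x (rep ck cm w (1,0,0))) (add3 (scl3 y (rep ck cm w (0,1,0))) (scl3 z (rep ck cm w (0,0,1))))"
proof -
  have "(x,y,z) = add3 (scl3 x (1,0,0)) (add3 (scl3 y (0,1,0)) (scl3 z (0,0,1)))"
    by (simp add: add3_def scl3_def)
  then show ?thesis by (metis rep_add rep_scl)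
qed

definition c1 :: "v3 \<Rightarrow> real" where "c1 v = fst (snd v)"
definition c2 :: "v3 \<Rightarrow> real" where "c2 v = snd (snd v)"

lemma c1_lin: "c1 (rep ck cm w (x,y,z)) =
   x * c1 (rep ck cm w (1,0,0)) + y * c1 (rep ck cm w (0,1,0)) + z * c1 (rep ck cm w (0,0,1))"
  by (subst rep_lin) (simp add: c1_def add3_def scl3_def)
lemma c2_lin: "c2 (rep ck cm w (x,y,z)) =
   x * c2 (rep ck cm w (1,0,0)) + y * c2 (rep ck cm w (0,1,0)) + z * c2 (rep ck cm w (0,0,1))"
  by (subst rep_lin) (simp add: c2_def add3_def scl3_def)

lemma rep12_fst: "set w \<subseteq> {1,2} \<Longrightarrow> fst (rep ck cm w v) = fst v"
proof (induction w arbitrary: v)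
  case (Cons s w)
  then have "s = 1 \<or> s = 2" by auto
  moreover have "fst (rep ck cm w v) = fst v" using Cons by simp
  ultimately show ?case by (cases "rep ck cm w v") (auto simp: sg_def)
qed simp

lemma rep02_c1: "set w \<subseteq> {0,2} \<Longrightarrow> c1 (rep ck cm w v) = c1 v"
proof (induction w arbitrary: v)
  case (Cons s w)
  then have "s = 0 \<or> s = 2" by auto
  moreover have "c1 (rep ck cm w v) = c1 v" using Cons by simp
  ultimately show ?case by (cases "rep ck cm w v") (auto simp: sg_def c1_def)
qed simp

lemma rep_rpU:
  assumes "ck^2 \<noteq> 1"
  shows "rep ck cm (rp j) (0,a,b) = (0, fst ((L2 ck ^^ j) (a,b)), snd ((L2 ck ^^ j) (a,b)))"
  using E12[OF assms, where cm=cm and j=j and x=0 and a=a and b=b] by (simp add: rep_braid)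

lemma pos_cos: "3 \<le> n \<Longrightarrow> cos (pi / real n) > 0"
proof -
  assume "3 \<le> n"
  then have "pi / real n < pi / 2" "0 < pi / real n" by (auto simp: field_simps)
  then show ?thesis by (intro cos_gt_zero_pi) auto
qed

lemma KT:
  assumes "0 < k" "cos (2 * real j * (pi / real k)) = 1"
  shows "k dvd j"
proof -
  from assms(2) obtain n :: int where n: "2 * real j * (pi / real k) = real_of_int n * 2 * pi"
    using cos_one_2pi_int by blast
  then have "real j = real_of_int n * real k" using assms(1) by (simp add: field_simps)
  then have "real_of_int (int j) = real_of_int (n * int k)" by simp
  then have "int j = n * int k" by (simp only: of_int_eq_iff)
  then have "int k dvd int j" by simp
  then show ?thesis by simp
qed

lemma G4:
  assumes "set g \<subseteq> {0,2}" "2 \<le> k" "2 \<le> m"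
  shows "\<not> coxeq k m [1] g"
proof
  assume "coxeq k m [1] g"
  from rep_cx[OF this assms(2,3)] have "c1 (rep (cos (pi/k)) (cos (pi/m)) [1] (0,1,0)) = c1 (rep (cos (pi/k)) (cos (pi/m)) g (0,1,0))"
    by simp
  also have "\<dots> = 1" using rep02_c1[OF assms(1)] by (simp add: c1_def)
  finally show False by (simp add: sg1' sg1 c1_def)
qed



lemma rpF:
  assumes "2 \<le> k"
  defines "t \<equiv> pi / real k"
  shows "sin t * c1 (rep (cos t) cm (rp j) (0,1,0)) = sin (2*j*t + t)"
    "sin t * c1 (rep (cos t) cm (rp j) (0,0,1)) = - sin (2*j*t)"
    "sin t * c2 (rep (cos t) cm (rp j) (0,1,0)) = sin (2*j*t)"
    "sin t * c2 (rep (cos t) cm (rp j) (0,0,1)) = - sin (2*j*t - t)"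
  using L2_pow[of t j 1 0] L2_pow[of t j 0 1]
    rep_rpU[OF cos_sq_ne1[OF assms(1)], where cm=cm and j=j and a=1 and b=0, folded t_def]
    rep_rpU[OF cos_sq_ne1[OF assms(1)], where cm=cm and j=j and a=0 and b=1, folded t_def]
  by (simp_all add: c1_def c2_def)

lemma sin_pk: "2 \<le> k \<Longrightarrow> sin (pi / real k) > 0"
  by (rule sin_gt_zero) (auto simp: field_simps)

lemma KEY1:
  fixes k j :: nat
  assumes "2 \<le> k" "c1 (rep (cos (pi/k)) cm (rp j) (0,1,0)) = 1" "c1 (rep (cos (pi/k)) cm (rp j) (0,0,1)) = 0"
  shows "k dvd j"
proof -
  define t where "t = pi / real k"
  note F = rpF[OF assms(1), where cm=cm and j=j, folded t_def]
  have s: "sin t > 0" using sin_pk[OF assms(1)] by (simp add: t_def)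
  from F(1) F(2) assms(2,3) have a: "sin (2*j*t + t) = sin t" "sin (2*j*t) = 0" by (simp_all add: t_def)
  have "sin (2*j*t + t) = cos (2*j*t) * sin t" using a(2) by (simp add: sin_add)
  with a(1) s have "cos (2*j*t) = 1" by simp
  then show ?thesis using KT[of k j] assms(1) by (simp add: t_def)
qed

lemma KEY2:
  fixes k j :: nat
  assumes "2 \<le> k" "c2 (rep (cos (pi/k)) cm (rp j) (0,1,0)) = 0" "c2 (rep (cos (pi/k)) cm (rp j) (0,0,1)) = 1"
  shows "k dvd j"
proof -
  define t where "t = pi / real k"
  note F = rpF[OF assms(1), where cm=cm and j=j, folded t_def]
  have s: "sin t > 0" using sin_pk[OF assms(1)] by (simp add: t_def)
  from F(3) F(4) assms(2,3) s have a: "sin (2*j*t - t) = - sin t" "sin (2*j*t) = 0"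
    by (simp_all add: t_def)
  have "sin (2*j*t - t) = - cos (2*j*t) * sin t" using a(2) by (simp add: sin_diff)
  with a(1) s have "cos (2*j*t) = 1" by simp
  then show ?thesis using KT[of k j] assms(1) by (simp add: t_def)
qed

lemma rep1: "rep ck cm [1] = sg ck cm 1" by simp

lemma G3:
  assumes x: "set x \<subseteq> {1,2}" and y: "set y \<subseteq> {1,2}"
    and e: "coxeq k m (0 # x @ [0]) y" and k: "3 \<le> k" and m: "3 \<le> m"
  shows "coxeq k m x [] \<or> coxeq k m x [1]"
proof -
  define ck where "ck = cos (pi/k)"
  define cm where "cm = cos (pi/m)"
  have cm0: "cm \<noteq> 0" using pos_cos[OF m] by (simp add: cm_def)
  have E: "rep ck cm (0 # x @ [0]) = rep ck cm y" unfolding ck_def cm_def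
    using rep_cx[OF e] k m by simp
  have fix2: "c2 (rep ck cm x u) = c2 u" for u
  proof -
    have "rep ck cm (0 # x @ [0]) (sg ck cm 0 u) = rep ck cm y (sg ck cm 0 u)" using E by simp
    then have "sg ck cm 0 (rep ck cm x u) = rep ck cm y (sg ck cm 0 u)"
      by (simp add: rep_append sg_invol)
    then have "fst (sg ck cm 0 (rep ck cm x u)) = fst (sg ck cm 0 u)"
      using rep12_fst[OF y] by simp
    moreover have "fst (rep ck cm x u) = fst u" using rep12_fst[OF x] .
    ultimately show ?thesis using cm0
      by (cases u; cases "rep ck cm x u") (auto simp: sg_def c2_def)
  qed
  from CF12[of k x m] k x obtain j where j: "j < k"
    and cf: "coxeq k m x (rp j) \<or> coxeq k m x (rp j @ [1])" by auto
  have k2: "2 \<le> k" "2 \<le> m" using k m by auto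
  show ?thesis
  proof (cases "coxeq k m x (rp j)")
    case True
    then have R: "rep ck cm x = rep ck cm (rp j)" unfolding ck_def cm_def using rep_cx k2 by blast
    have "k dvd j" using KEY2[OF k2(1), where cm=cm and j=j] fix2[of "(0,1,0)"] fix2[of "(0,0,1)"]
      unfolding R by (simp add: c2_def ck_def)
    with j have "j = 0" by (auto dest: dvd_imp_le)
    with True show ?thesis by simp
  next
    case False
    with cf have cx: "coxeq k m x (rp j @ [1])" by simp
    then have R: "rep ck cm x = rep ck cm (rp j) \<circ> sg ck cm 1" unfolding ck_def cm_def
      using rep_cx[OF cx k2] by (simp add: rep_append)
    have "k dvd j" using KEY2[OF k2(1), where cm=cm and j=j] fix2[of "(0,-1,0)"] fix2[of "(0,2*ck,1)"]
      unfolding R by (simp add: c2_def ck_def sg1' sg1)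
    with j have "j = 0" by (auto dest: dvd_imp_le)
    with cx show ?thesis by simp
  qed
qed



lemma STAB:
  fixes k m :: nat
  assumes z: "set z \<subseteq> {1,2}" and k: "3 \<le> k" and m: "3 \<le> m"
    and h1: "c1 (rep (cos (pi/k)) (cos (pi/m)) z (0,1,0)) = 1"
    and h2: "c1 (rep (cos (pi/k)) (cos (pi/m)) z (0,0,1)) = 0"
  shows "coxeq k m z [] \<or> coxeq k m z [2]"
proof -
  define ck where "ck = cos (pi/k)"
  define cm where "cm = cos (pi/m)"
  have k2: "2 \<le> k" "2 \<le> m" using k m by auto
  from CF12[of k z m] k z obtain j where j: "j < k"
    and cf: "coxeq k m z (rp j) \<or> coxeq k m z (rp j @ [1])" by auto
  show ?thesis
  proof (cases "coxeq k m z (rp j)")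
    case True
    then have R: "rep ck cm z = rep ck cm (rp j)" unfolding ck_def cm_def using rep_cx k2 by blast
    have "k dvd j" using KEY1[OF k2(1), where cm=cm and j=j] h1 h2
      unfolding R[unfolded ck_def cm_def] by (simp add: cm_def)
    with j have "j = 0" by (auto dest: dvd_imp_le)
    with True show ?thesis by simp
  next
    case False
    with cf have cx: "coxeq k m z (rp j @ [1])" by simp
    then have R: "rep ck cm z = rep ck cm (rp j) \<circ> sg ck cm 1" unfolding ck_def cm_def
      using rep_cx[OF cx k2] by (simp add: rep_append)
    define F1 where "F1 = c1 (rep ck cm (rp j) (0,1,0))"
    define F2 where "F2 = c1 (rep ck cm (rp j) (0,0,1))"
    have a1: "- F1 = 1" using h1 c1_lin[of ck cm "rp j" 0 "-1" 0] unfolding R[unfolded ck_def cm_def]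
      by (simp add: sg1' sg1 F1_def ck_def cm_def)
    have a2: "2*ck*F1 + F2 = 0" using h2 c1_lin[of ck cm "rp j" 0 "2*ck" 1] unfolding R[unfolded ck_def cm_def]
      by (simp add: sg1' sg1 F1_def F2_def ck_def cm_def)
    have RS: "rep ck cm (rp (Suc j)) = rep ck cm (rp j) \<circ> sg ck cm 1 \<circ> sg ck cm 2"
      by (simp add: braid_Suc' rep_append fun_eq_iff)
    have b1: "c1 (rep ck cm (rp (Suc j)) (0,1,0)) = 1"
      using c1_lin[of ck cm "rp j" 0 "-1 + 4*ck*ck" "2*ck"] a1 a2 unfolding RS
      by (simp add: sg1' sg1 sg2 F1_def F2_def algebra_simps)
    have b2: "c1 (rep ck cm (rp (Suc j)) (0,0,1)) = 0"
      using c1_lin[of ck cm "rp j" 0 "-2*ck" "-1"] a1 a2 unfolding RS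
      by (simp add: sg1' sg1 sg2 F1_def F2_def algebra_simps)
    have "k dvd Suc j" using KEY1[OF k2(1), where cm=cm and j="Suc j"] b1 b2 by (simp add: ck_def)
    with j have "Suc j = k" by (auto dest: dvd_imp_le)
    then have "j = k - 1" by simp
    with cx cx_2[of k m] k have "coxeq k m z [2]" by (auto intro: cx_trans cx_sym)
    then show ?thesis by simp
  qed
qed

lemma INV:
  fixes ck cm :: real
  assumes "set z \<subseteq> {1,2}"
  shows "c1 (rep ck cm z (1,0,0)) * (1 - ck^2) + cm * (ck * c1 (rep ck cm z (0,1,0)) + c1 (rep ck cm z (0,0,1))) = cm * ck
    \<and> (c1 (rep ck cm z (0,1,0)))^2 + (c1 (rep ck cm z (0,0,1)))^2
       + 2*ck*c1 (rep ck cm z (0,1,0))*c1 (rep ck cm z (0,0,1)) = 1"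
  using assms
proof (induction z rule: rev_induct)
  case Nil then show ?case by (simp add: c1_def)
next
  case (snoc s z)
  then have IH: "c1 (rep ck cm z (1,0,0)) * (1 - ck^2) + cm * (ck * c1 (rep ck cm z (0,1,0)) + c1 (rep ck cm z (0,0,1))) = cm * ck"
    "(c1 (rep ck cm z (0,1,0)))^2 + (c1 (rep ck cm z (0,0,1)))^2
       + 2*ck*c1 (rep ck cm z (0,1,0))*c1 (rep ck cm z (0,0,1)) = 1"
    and s: "s = 1 \<or> s = 2" by auto
  define F0 where "F0 = c1 (rep ck cm z (1,0,0))"
  define F1 where "F1 = c1 (rep ck cm z (0,1,0))"
  define F2 where "F2 = c1 (rep ck cm z (0,0,1))"
  have R: "rep ck cm (z @ [s]) = rep ck cm z \<circ> sg ck cm s" by (simp add: rep_append fun_eq_iff)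
  have L: "c1 (rep ck cm z (x,y,w)) = x*F0 + y*F1 + w*F2" for x y w
    unfolding F0_def F1_def F2_def by (rule c1_lin)
  from s show ?case
  proof
    assume s1: "s = 1"
    have v: "c1 (rep ck cm (z@[s]) (1,0,0)) = F0" "c1 (rep ck cm (z@[s]) (0,1,0)) = - F1"
      "c1 (rep ck cm (z@[s]) (0,0,1)) = 2*ck*F1 + F2"
      by (simp_all add: rep_append s1 sg1' sg1 L)
    show ?case unfolding v using IH unfolding F0_def[symmetric] F1_def[symmetric] F2_def[symmetric]
      by (simp add: algebra_simps power2_eq_square)
  next
    assume s2: "s = 2"
    have v: "c1 (rep ck cm (z@[s]) (1,0,0)) = F0 + 2*cm*F2" "c1 (rep ck cm (z@[s]) (0,1,0)) = F1 + 2*ck*F2"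
      "c1 (rep ck cm (z@[s]) (0,0,1)) = - F2"
      by (simp_all add: rep_append s2 sg2 L)
    show ?case unfolding v using IH unfolding F0_def[symmetric] F1_def[symmetric] F2_def[symmetric]
      by (simp add: algebra_simps power2_eq_square)
  qed
qed



lemma G5:
  fixes k m :: nat
  assumes a: "set a \<subseteq> {1,2}" and c: "set c \<subseteq> {1,2}" and t: "set t \<subseteq> {0,2}"
    and e: "coxeq k m (0 # c) (a @ t)" and k: "3 \<le> k" and m: "3 \<le> m"
  shows "coxeq k m a [] \<or> coxeq k m a [1] \<or> coxeq k m a [2] \<or> coxeq k m a [1,2]"
proof -
  define ck where "ck = cos (pi/k)"
  define cm where "cm = cos (pi/m)"
  have k2: "2 \<le> k" "2 \<le> m" using k m by auto
  have cm0: "cm \<noteq> 0" using pos_cos[OF m] by (simp add: cm_def)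
  have ck0: "ck \<noteq> 0" using pos_cos[OF k] by (simp add: ck_def)
  have ck1: "1 - ck^2 \<noteq> 0" using cos_sq_ne1[OF k2(1)] by (simp add: ck_def)
  have ra: "set (rev a) \<subseteq> {1,2}" and rc: "set (rev c) \<subseteq> {1,2}" and rt: "set (rev t) \<subseteq> {0,2}"
    using a c t by auto
  have e': "coxeq k m (rev c @ [0]) (rev t @ rev a)" using cx_rev[OF e] by simp
  have RE: "rep ck cm (rev c @ [0]) = rep ck cm (rev t @ rev a)"
    unfolding ck_def cm_def by (rule rep_cx[OF e' k2])
  have key: "c1 (rep ck cm (rev c) (sg ck cm 0 v)) = c1 (rep ck cm (rev a) v)" for v
  proof -
    have "rep ck cm (rev c @ [0]) v = rep ck cm (rev t @ rev a) v" using RE by simp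
    then have "rep ck cm (rev c) (sg ck cm 0 v) = rep ck cm (rev t) (rep ck cm (rev a) v)"
      by (simp add: rep_append)
    then show ?thesis using rep02_c1[OF rt] by simp
  qed
  define \<mu>0 where "\<mu>0 = c1 (rep ck cm (rev a) (1,0,0))"
  define \<mu>1 where "\<mu>1 = c1 (rep ck cm (rev a) (0,1,0))"
  define \<mu>2 where "\<mu>2 = c1 (rep ck cm (rev a) (0,0,1))"
  define \<nu>0 where "\<nu>0 = c1 (rep ck cm (rev c) (1,0,0))"
  define \<nu>1 where "\<nu>1 = c1 (rep ck cm (rev c) (0,1,0))"
  define \<nu>2 where "\<nu>2 = c1 (rep ck cm (rev c) (0,0,1))"
  have h0: "\<mu>0 = - \<nu>0" using key[of "(1,0,0)"] c1_lin[of ck cm "rev c" "-1" 0 0]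
    by (simp add: sg0 \<mu>0_def \<nu>0_def)
  have h1: "\<mu>1 = \<nu>1" using key[of "(0,1,0)"] by (simp add: sg0 \<mu>1_def \<nu>1_def)
  have IA: "\<mu>0 * (1 - ck^2) + cm * (ck * \<mu>1 + \<mu>2) = cm * ck" "\<mu>1^2 + \<mu>2^2 + 2*ck*\<mu>1*\<mu>2 = 1"
    using INV[OF ra, of ck cm] unfolding \<mu>0_def \<mu>1_def \<mu>2_def by auto
  have IC: "\<nu>0 * (1 - ck^2) + cm * (ck * \<nu>1 + \<nu>2) = cm * ck" "\<nu>1^2 + \<nu>2^2 + 2*ck*\<nu>1*\<nu>2 = 1"
    using INV[OF rc, of ck cm] unfolding \<nu>0_def \<nu>1_def \<nu>2_def by auto
  have "cm * (2*ck*\<mu>1 + \<mu>2 + \<nu>2) = cm * (2*ck)"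
    using IA(1) IC(1) h0 h1 by (simp add: algebra_simps)
  with cm0 have s1: "2*ck*\<mu>1 + \<mu>2 + \<nu>2 = 2*ck" by simp
  have P: "(\<mu>2 - \<nu>2) * (\<mu>2 + \<nu>2 + 2*ck*\<mu>1) = 0"
    using IA(2) IC(2) h1 by (simp add: algebra_simps power2_eq_square)
  have Q: "\<mu>2 + \<nu>2 + 2*ck*\<mu>1 = 2*ck" using s1 by linarith
  from P have "(\<mu>2 - \<nu>2) * (2*ck) = 0" unfolding Q .
  with ck0 have "\<mu>2 = \<nu>2" by simp
  with s1 have m2: "\<mu>2 = ck - ck*\<mu>1" by simp
  have "(1 - ck^2) * (\<mu>1^2 - 1) = 0" using IA(2) unfolding m2 by (simp add: algebra_simps power2_eq_square)
  with ck1 have "\<mu>1^2 = 1" by simp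
  then have "\<mu>1 = 1 \<or> \<mu>1 = -1" by (simp add: power2_eq_1_iff)
  then show ?thesis
  proof
    assume u: "\<mu>1 = 1"
    with m2 have "\<mu>2 = 0" by simp
    with u have "coxeq k m (rev a) [] \<or> coxeq k m (rev a) [2]"
      using STAB[OF ra k m] unfolding \<mu>1_def \<mu>2_def ck_def cm_def by simp
    then have "coxeq k m (rev (rev a)) [] \<or> coxeq k m (rev (rev a)) [2]"
      using cx_rev[of k m "rev a"] by fastforce
    then show ?thesis by auto
  next
    assume u: "\<mu>1 = -1"
    with m2 have u2: "\<mu>2 = 2*ck" by simp
    have ra1: "set (rev a @ [1]) \<subseteq> {1,2}" using ra by auto
    have f1: "c1 (rep ck cm (rev a @ [1]) (0,1,0)) = 1"
      using c1_lin[of ck cm "rev a" 0 "-1" 0] u by (simp add: rep_append sg1' sg1 \<mu>1_def)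
    have f2: "c1 (rep ck cm (rev a @ [1]) (0,0,1)) = 0"
      using c1_lin[of ck cm "rev a" 0 "2*ck" 1] u u2 by (simp add: rep_append sg1' sg1 \<mu>1_def \<mu>2_def)
    have "coxeq k m (rev a @ [1]) [] \<or> coxeq k m (rev a @ [1]) [2]"
      using STAB[OF ra1 k m] f1 f2 unfolding ck_def cm_def by simp
    then have "coxeq k m ((rev a @ [1]) @ [1]) [1] \<or> coxeq k m ((rev a @ [1]) @ [1]) [2,1]"
      using cx_app[OF _ cx_refl, of k m "rev a @ [1]" _ "[1]"] by fastforce
    moreover have "coxeq k m (rev a) ((rev a @ [1]) @ [1])"
      using cx_ss'[of 1 k m "rev a" "[]"] by simp
    ultimately have "coxeq k m (rev a) [1] \<or> coxeq k m (rev a) [2,1]" by (meson cx_trans)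
    then have "coxeq k m (rev (rev a)) [1] \<or> coxeq k m (rev (rev a)) [1,2]"
      using cx_rev[of k m "rev a"] by fastforce
    then show ?thesis by auto
  qed
qed



lemma cl_le: "set w \<subseteq> {0,1,2} \<Longrightarrow> cox_len k m w \<le> length w"
  unfolding cox_len_def by (rule Least_le) (auto intro: cx_refl)

lemma cl_ex: "set w \<subseteq> {0,1,2} \<Longrightarrow> \<exists>u. set u \<subseteq> {0,1,2} \<and> length u = cox_len k m w \<and> coxeq k m u w"
  unfolding cox_len_def by (rule LeastI_ex) (auto intro: cx_refl)

lemma cl_cong: "coxeq k m u w \<Longrightarrow> cox_len k m u = cox_len k m w"
proof -
  assume h: "coxeq k m u w"
  have "(\<lambda>n. \<exists>u'. set u' \<subseteq> {0,1,2} \<and> length u' = n \<and> coxeq k m u' u)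
      = (\<lambda>n. \<exists>u'. set u' \<subseteq> {0,1,2} \<and> length u' = n \<and> coxeq k m u' w)"
  proof (rule ext)
    fix n
    show "(\<exists>u'. set u' \<subseteq> {0,1,2} \<and> length u' = n \<and> coxeq k m u' u)
      = (\<exists>u'. set u' \<subseteq> {0,1,2} \<and> length u' = n \<and> coxeq k m u' w)"
      using h by (blast intro: cx_trans cx_sym)
  qed
  then show ?thesis unfolding cox_len_def by simp
qed

definition reduced :: "nat \<Rightarrow> nat \<Rightarrow> nat list \<Rightarrow> bool" where
  "reduced k m f \<longleftrightarrow> set f \<subseteq> {0,1,2} \<and> cox_len k m f = length f"

lemma red_suffix: "reduced k m (p @ q) \<Longrightarrow> reduced k m q"
proof -
  assume r: "reduced k m (p @ q)"
  then have sq: "set q \<subseteq> {0,1,2}" and sp: "set p \<subseteq> {0,1,2}" by (auto simp: reduced_def)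
  have "\<not> cox_len k m q < length q"
  proof
    assume lt: "cox_len k m q < length q"
    obtain q' where q': "set q' \<subseteq> {0,1,2}" "length q' = cox_len k m q" "coxeq k m q' q"
      using cl_ex[OF sq] by blast
    have "coxeq k m (p @ q') (p @ q)" using cx_app[OF cx_refl q'(3)] .
    then have "cox_len k m (p @ q) = cox_len k m (p @ q')" by (simp add: cl_cong)
    also have "\<dots> \<le> length (p @ q')" using q'(1) sp by (intro cl_le) auto
    finally show False using lt q'(2) r by (simp add: reduced_def)
  qed
  with cl_le[OF sq, of k m] sq show ?thesis by (simp add: reduced_def)
qed

lemma red_rev: "reduced k m f \<Longrightarrow> reduced k m (rev f)"
proof -
  assume r: "reduced k m f"
  then have sf: "set (rev f) \<subseteq> {0,1,2}" by (auto simp: reduced_def)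
  have "\<not> cox_len k m (rev f) < length f"
  proof
    assume lt: "cox_len k m (rev f) < length f"
    obtain u where u: "set u \<subseteq> {0,1,2}" "length u = cox_len k m (rev f)" "coxeq k m u (rev f)"
      using cl_ex[OF sf] by blast
    have "coxeq k m (rev u) f" using cx_rev[OF u(3)] by simp
    then have "cox_len k m f = cox_len k m (rev u)" by (simp add: cl_cong)
    also have "\<dots> \<le> length (rev u)" using u(1) by (intro cl_le) auto
    finally show False using lt u(2) r by (simp add: reduced_def)
  qed
  with cl_le[OF sf, of k m] sf show ?thesis by (simp add: reduced_def)
qed

locale bld =
  fixes k m :: nat and \<delta> :: "'c \<Rightarrow> 'c \<Rightarrow> nat list"
  assumes B: "building k m \<delta>"
begin

lemma wd: "set (\<delta> C D) \<subseteq> {0,1,2}" using B unfolding building_def by blast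
lemma did: "coxeq k m (\<delta> C D) [] \<longleftrightarrow> C = D" using B unfolding building_def by blast
lemma a3: "s < 3 \<Longrightarrow> coxeq k m (\<delta> C' C) [s] \<Longrightarrow>
   coxeq k m (\<delta> C' D) (s # \<delta> C D) \<or> coxeq k m (\<delta> C' D) (\<delta> C D)"
  using B unfolding building_def by blast
lemma a3b: "s < 3 \<Longrightarrow> coxeq k m (\<delta> C' C) [s] \<Longrightarrow>
   cox_len k m (s # \<delta> C D) = cox_len k m (\<delta> C D) + 1 \<Longrightarrow> coxeq k m (\<delta> C' D) (s # \<delta> C D)"
  using B unfolding building_def by blast
lemma a4: "s < 3 \<Longrightarrow> \<exists>C'. coxeq k m (\<delta> C' C) [s] \<and> coxeq k m (\<delta> C' D) (s # \<delta> C D)"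
  using B unfolding building_def by blast

lemma cx_Cons_ss: "s < 3 \<Longrightarrow> coxeq k m w (s # f) \<Longrightarrow> coxeq k m (s # w) f"
proof -
  assume s: "s < 3" and h: "coxeq k m w (s # f)"
  have "coxeq k m ([s] @ w) ([s] @ s # f)" by (rule cx_app[OF cx_refl h])
  also have "coxeq k m ([s] @ s # f) ([] @ f)" using cx_ss[OF s, of k m "[]" f] by simp
  finally show ?thesis by simp
qed

lemma SYMG: "coxeq k m (\<delta> Y B) f \<Longrightarrow> coxeq k m (\<delta> Y Z) q \<Longrightarrow> reduced k m (rev f @ q)
   \<Longrightarrow> coxeq k m (\<delta> B Z) (rev f @ q)"
proof (induction f arbitrary: Y q)
  case Nil
  then have "Y = B" using did by blast
  with Nil show ?case by simp
next
  case (Cons s f)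
  have s: "s < 3" using Cons.prems(3) by (auto simp: reduced_def)
  obtain X where X: "coxeq k m (\<delta> X Y) [s]" "coxeq k m (\<delta> X B) (s # \<delta> Y B)" using a4[OF s] by blast
  have XB: "coxeq k m (\<delta> X B) f" using X(2) cx_Cons_ss[OF s Cons.prems(1)] by (rule cx_trans)
  have rq: "reduced k m (s # q)" and rq': "reduced k m q"
    using red_suffix[of k m "rev f" "s # q"] red_suffix[of k m "rev f @ [s]" q] Cons.prems(3) by auto
  have "cox_len k m (s # \<delta> Y Z) = cox_len k m (s # q)"
    using cl_cong cx_app[OF cx_refl Cons.prems(2), of "[s]"] by simp
  also have "\<dots> = length q + 1" using rq by (simp add: reduced_def)
  also have "\<dots> = cox_len k m (\<delta> Y Z) + 1" using rq' cl_cong[OF Cons.prems(2)] by (simp add: reduced_def)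
  finally have XZ0: "coxeq k m (\<delta> X Z) (s # \<delta> Y Z)" by (rule a3b[OF s X(1)])
  have XZ: "coxeq k m (\<delta> X Z) (s # q)"
    using XZ0 cx_app[OF cx_refl Cons.prems(2), of "[s]"] by (auto intro: cx_trans)
  have "reduced k m (rev f @ s # q)" using Cons.prems(3) by simp
  from Cons.IH[OF XB XZ this] show ?case by simp
qed

lemma SYM: "coxeq k m (\<delta> B A) (rev (\<delta> A B))"
proof -
  obtain u where u: "set u \<subseteq> {0,1,2}" "length u = cox_len k m (\<delta> A B)" "coxeq k m u (\<delta> A B)"
    using cl_ex[OF wd] by blast
  have "reduced k m u" using u cl_cong[OF u(3)] by (simp add: reduced_def)
  then have "reduced k m (rev u @ [])" using red_rev by simp
  from SYMG[of A B u A "[]"] this cx_sym[OF u(3)] did[of A A]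
  have "coxeq k m (\<delta> B A) (rev u)" by simp
  also have "coxeq k m (rev u) (rev (\<delta> A B))" by (rule cx_rev[OF u(3)])
  finally show ?thesis .
qed

lemma SYM1: "coxeq k m (\<delta> A B) [s] \<Longrightarrow> coxeq k m (\<delta> B A) [s]"
  using SYM[of B A] cx_rev[of k m "\<delta> A B" "[s]"] by (auto intro: cx_trans)

lemma RSTEP:
  assumes s: "s < 3" and h: "coxeq k m (\<delta> Y Z) [s]"
  shows "coxeq k m (\<delta> X Z) (\<delta> X Y) \<or> coxeq k m (\<delta> X Z) (\<delta> X Y @ [s])"
proof -
  have ZY: "coxeq k m (\<delta> Z Y) [s]" by (rule SYM1[OF h])
  have XZ: "coxeq k m (\<delta> X Z) (rev (\<delta> Z X))" by (rule SYM)
  have YX: "coxeq k m (rev (\<delta> Y X)) (\<delta> X Y)" using cx_sym[OF SYM[of X Y]] by simp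
  from a3[OF s ZY, of X] show ?thesis
  proof
    assume "coxeq k m (\<delta> Z X) (s # \<delta> Y X)"
    from cx_rev[OF this] have "coxeq k m (rev (\<delta> Z X)) (rev (\<delta> Y X) @ [s])" by simp
    also have "coxeq k m (rev (\<delta> Y X) @ [s]) (\<delta> X Y @ [s])" by (rule cx_app[OF YX cx_refl])
    finally show ?thesis using XZ by (auto intro: cx_trans)
  next
    assume "coxeq k m (\<delta> Z X) (\<delta> Y X)"
    from cx_rev[OF this] have "coxeq k m (rev (\<delta> Z X)) (rev (\<delta> Y X))" .
    then show ?thesis using XZ YX by (auto intro: cx_trans)
  qed
qed

lemma LEML: "set h \<subseteq> J \<Longrightarrow> J \<subseteq> {0,1,2} \<Longrightarrow> coxeq k m (\<delta> Y Z) h \<Longrightarrow>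
  \<exists>t. set t \<subseteq> J \<and> coxeq k m (\<delta> X Z) (\<delta> X Y @ t)"
proof (induction h arbitrary: Y)
  case Nil
  then have "Y = Z" using did by blast
  then show ?case by (intro exI[of _ "[]"]) (auto intro: cx_refl)
next
  case (Cons s h)
  have sJ: "s \<in> J" and s: "s < 3" using Cons.prems by auto
  obtain W where W: "coxeq k m (\<delta> W Y) [s]" "coxeq k m (\<delta> W Z) (s # \<delta> Y Z)" using a4[OF s] by blast
  have WZ: "coxeq k m (\<delta> W Z) h" using W(2) cx_Cons_ss[OF s Cons.prems(3)] by (rule cx_trans)
  obtain t where t: "set t \<subseteq> J" "coxeq k m (\<delta> X Z) (\<delta> X W @ t)"
    using Cons.IH[OF _ Cons.prems(2) WZ] Cons.prems(1) by auto
  from RSTEP[OF s SYM1[OF W(1)], of X] show ?case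
  proof
    assume "coxeq k m (\<delta> X W) (\<delta> X Y)"
    then have "coxeq k m (\<delta> X Z) (\<delta> X Y @ t)" using t(2) cx_app[OF _ cx_refl] by (meson cx_trans)
    then show ?case using t(1) by blast
  next
    assume "coxeq k m (\<delta> X W) (\<delta> X Y @ [s])"
    then have "coxeq k m (\<delta> X Z) (\<delta> X Y @ s # t)" using t(2) cx_app[OF _ cx_refl, of k m "\<delta> X W" "\<delta> X Y @ [s]" t]
      by (simp add: cx_trans)
    then show ?case using t(1) sJ by (intro exI[of _ "s # t"]) auto
  qed
qed

lemma res_mem: "D \<in> residue k m \<delta> J C \<longleftrightarrow> (\<exists>u. set u \<subseteq> J \<and> coxeq k m (\<delta> C D) u)"
  by (simp add: residue_def)

lemma res_self: "C \<in> residue k m \<delta> J C"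
  unfolding res_mem using did[of C C] by (intro exI[of _ "[]"]) auto

lemma res_eq:
  assumes J: "J \<subseteq> {0,1,2}" and D: "D \<in> residue k m \<delta> J C"
  shows "residue k m \<delta> J D = residue k m \<delta> J C"
proof -
  obtain u where u: "set u \<subseteq> J" "coxeq k m (\<delta> C D) u" using D by (auto simp: res_mem)
  show ?thesis
  proof
    show "residue k m \<delta> J D \<subseteq> residue k m \<delta> J C"
    proof
      fix E assume "E \<in> residue k m \<delta> J D"
      then obtain h where h: "set h \<subseteq> J" "coxeq k m (\<delta> D E) h" by (auto simp: res_mem)
      obtain t where t: "set t \<subseteq> J" "coxeq k m (\<delta> C E) (\<delta> C D @ t)" using LEML[OF h(1) J h(2), of C] by blast
      have "coxeq k m (\<delta> C E) (u @ t)" using t(2) cx_app[OF u(2) cx_refl] by (rule cx_trans)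
      with u t show "E \<in> residue k m \<delta> J C" unfolding res_mem by (intro exI[of _ "u @ t"]) auto
    qed
  next
    show "residue k m \<delta> J C \<subseteq> residue k m \<delta> J D"
    proof
      fix E assume "E \<in> residue k m \<delta> J C"
      then obtain h where h: "set h \<subseteq> J" "coxeq k m (\<delta> C E) h" by (auto simp: res_mem)
      obtain t where t: "set t \<subseteq> J" "coxeq k m (\<delta> D E) (\<delta> D C @ t)" using LEML[OF h(1) J h(2), of D] by blast
      have DC: "coxeq k m (\<delta> D C) (rev u)" using SYM[of D C] cx_rev[OF u(2)] by (rule cx_trans)
      have "coxeq k m (\<delta> D E) (rev u @ t)" using t(2) cx_app[OF DC cx_refl] by (rule cx_trans)
      with u t show "E \<in> residue k m \<delta> J D" unfolding res_mem by (intro exI[of _ "rev u @ t"]) auto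
    qed
  qed
qed

lemma res_int:
  assumes "J \<subseteq> {0,1,2}" "X \<in> residue k m \<delta> J A" "X \<in> residue k m \<delta> J B"
  shows "residue k m \<delta> J A = residue k m \<delta> J B"
  using res_eq[OF assms(1,2)] res_eq[OF assms(1,3)] by simp

end



context bld begin

abbreviation R where "R J C \<equiv> residue k m \<delta> J C"

lemma memI: "set u \<subseteq> J \<Longrightarrow> coxeq k m (\<delta> C D) u \<Longrightarrow> D \<in> R J C"
  by (auto simp: res_mem)

lemma memI1: "coxeq k m (\<delta> C D) [s] \<Longrightarrow> s \<in> J \<Longrightarrow> D \<in> R J C"
  by (rule memI[of "[s]"]) auto

lemma res_of: "J \<subseteq> {0,1,2} \<Longrightarrow> C \<in> R J A \<Longrightarrow> R J A = R J C"
  using res_eq by simp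

lemma PICK:
  assumes vv: "R {1,2} A \<noteq> R {1,2} A'"
    and C: "C \<in> R {1,2} A" "C \<in> R {0,1} B" and C1: "C1 \<in> R {1,2} A'" "C1 \<in> R {0,1} B"
  shows "\<exists>C'. C' \<in> R {1,2} A' \<and> C' \<in> R {0,1} B \<and> coxeq k m (\<delta> C C') [0]"
proof -
  have v: "R {1,2} A = R {1,2} C" and w: "R {0,1} B = R {0,1} C"
    using res_of C by auto
  have v': "R {1,2} A' = R {1,2} C1" and w': "R {0,1} B = R {0,1} C1"
    using res_of C1 by auto
  have "C1 \<in> R {0,1} C" using C1(2) w by simp
  then obtain p where p: "set p \<subseteq> {0,1}" "coxeq k m (\<delta> C C1) p" by (auto simp: res_mem)
  have bad: False if "coxeq k m (\<delta> C C1) q" "set q \<subseteq> {1,2}" for q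
  proof -
    have "C1 \<in> R {1,2} C" using memI[OF that(2,1)] .
    then have "R {1,2} C = R {1,2} C1" using res_of by simp
    with v v' vv show False by simp
  qed
  from CF01[OF p(1), of k m] show ?thesis
  proof (elim disjE)
    assume "coxeq k m p []"
    from bad[OF cx_trans[OF p(2) this]] show ?thesis by simp
  next
    assume "coxeq k m p [1]"
    from bad[OF cx_trans[OF p(2) this]] show ?thesis by simp
  next
    assume "coxeq k m p [0]"
    with p C1 show ?thesis by (meson cx_trans)
  next
    assume h: "coxeq k m p [0,1]"
    obtain X where X: "coxeq k m (\<delta> X C) [0]" "coxeq k m (\<delta> X C1) (0 # \<delta> C C1)"
      using a4[of 0] by auto
    have "coxeq k m (0 # \<delta> C C1) (0 # [0,1])" using cx_app[OF cx_refl cx_trans[OF p(2) h], of "[0]"] by simp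
    also have "coxeq k m (0 # [0,1]) [1]" using cx_ss[of 0 k m "[]" "[1]"] by simp
    finally have "coxeq k m (\<delta> X C1) [1]" using X(2) by (meson cx_trans)
    then have "X \<in> R {1,2} C1" using memI1[OF SYM1] by simp
    moreover have "X \<in> R {0,1} C" using memI1[OF SYM1[OF X(1)]] by simp
    ultimately show ?thesis using v' w SYM1[OF X(1)] by auto
  qed
qed

end



context bld begin

lemma vsep: "R {1,2} A \<noteq> R {1,2} A' \<Longrightarrow> X \<in> R {1,2} A \<Longrightarrow> X \<in> R {1,2} A' \<Longrightarrow> False"
  using res_int[of "{1,2}" X A A'] by simp

lemma STEP0:
  assumes vv: "R {1,2} A \<noteq> R {1,2} A'" and C: "C \<in> R {1,2} A" and C': "C' \<in> R {1,2} A'"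
    and e: "coxeq k m (\<delta> C C') [0]" and D': "D' \<in> R {1,2} A'"
  shows "coxeq k m (\<delta> C D') (0 # \<delta> C' D')"
proof -
  from a3[of 0 C C' D'] e have "coxeq k m (\<delta> C D') (0 # \<delta> C' D') \<or> coxeq k m (\<delta> C D') (\<delta> C' D')" by simp
  moreover have False if h: "coxeq k m (\<delta> C D') (\<delta> C' D')"
  proof -
    have "D' \<in> R {1,2} C'" using D' res_of[OF _ C'] by simp
    then obtain u where u: "set u \<subseteq> {1,2}" "coxeq k m (\<delta> C' D') u" by (auto simp: res_mem)
    have "D' \<in> R {1,2} C" using memI[OF u(1) cx_trans[OF h u(2)]] .
    then have "D' \<in> R {1,2} A" using res_of[OF _ C] by simp
    with vsep[OF vv _ D'] show False by simp
  qed
  ultimately show ?thesis by blast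
qed

lemma CLAIM1:
  assumes k: "3 \<le> k" and m: "3 \<le> m" and vv: "R {1,2} A \<noteq> R {1,2} A'"
    and C: "C \<in> R {1,2} A" "C \<in> R {0,1} B" and C': "C' \<in> R {1,2} A'" "C' \<in> R {0,1} B"
    and eC: "coxeq k m (\<delta> C C') [0]"
    and D: "D \<in> R {1,2} A" "D \<in> R {0,1} B'" and D': "D' \<in> R {1,2} A'" "D' \<in> R {0,1} B'"
    and eD: "coxeq k m (\<delta> D D') [0]"
  shows "R {0,1} B' = R {0,1} B"
proof -
  have h1: "coxeq k m (\<delta> C D') (0 # \<delta> C' D')" by (rule STEP0[OF vv C(1) C'(1) eC D'(1)])
  have vv': "R {1,2} A' \<noteq> R {1,2} A" using vv by simp
  have h2: "coxeq k m (\<delta> D' C) (0 # \<delta> D C)" by (rule STEP0[OF vv' D'(1) D(1) SYM1[OF eD] C(1)])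
  have "C \<in> R {1,2} D" using C(1) res_of[OF _ D(1)] by simp
  then obtain a where a: "set a \<subseteq> {1,2}" "coxeq k m (\<delta> D C) a" by (auto simp: res_mem)
  have "D' \<in> R {1,2} C'" using D'(1) res_of[OF _ C'(1)] by simp
  then obtain c where c: "set c \<subseteq> {1,2}" "coxeq k m (\<delta> C' D') c" by (auto simp: res_mem)
  have "coxeq k m (0 # a) (0 # \<delta> D C)" using cx_app[OF cx_refl cx_sym[OF a(2)], of "[0]"] by simp
  also have "coxeq k m \<dots> (\<delta> D' C)" using cx_sym[OF h2] .
  also have "coxeq k m \<dots> (rev (\<delta> C D'))" by (rule SYM)
  also have "coxeq k m \<dots> (rev (0 # c))" using cx_rev[OF h1] cx_rev[OF cx_app[OF cx_refl c(2), of "[0]"]]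
    by (simp add: cx_trans)
  finally have "coxeq k m (0 # a) (rev c @ [0])" by simp
  then have "coxeq k m ((0 # a) @ [0]) ((rev c @ [0]) @ [0])" using cx_app[OF _ cx_refl] by blast
  also have "coxeq k m ((rev c @ [0]) @ [0]) (rev c @ [])" using cx_ss[of 0 k m "rev c" "[]"] by simp
  finally have "coxeq k m (0 # a @ [0]) (rev c)" by simp
  from G3[OF a(1) _ this k m] c(1) have "coxeq k m a [] \<or> coxeq k m a [1]" by auto
  then have "C \<in> R {0,1} D" using memI[of "[]" "{0,1}" D C] memI[of "[1]" "{0,1}" D C] cx_trans[OF a(2)] by auto
  then have "R {0,1} D = R {0,1} C" using res_of by simp
  moreover have "R {0,1} B' = R {0,1} D" "R {0,1} B = R {0,1} C" using res_of D(2) C(2) by auto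
  ultimately show ?thesis by simp
qed

lemma CLAIM2:
  assumes k: "3 \<le> k" and m: "3 \<le> m" and vv: "R {1,2} A \<noteq> R {1,2} A'"
    and C: "C \<in> R {1,2} A" "C \<in> R {0,1} B" and C': "C' \<in> R {1,2} A'" "C' \<in> R {0,1} B"
    and eC: "coxeq k m (\<delta> C C') [0]"
    and E: "E \<in> R {1,2} A" "E \<in> R {0,2} F" and E': "E' \<in> R {1,2} A'" "E' \<in> R {0,2} F"
  shows "R {0,1} B \<inter> R {0,2} F \<noteq> {} \<and> R {0,1} B \<noteq> R {0,2} F"
proof -
  have wB: "R {0,1} B = R {0,1} C" using res_of C(2) by simp
  have uF: "R {0,2} F = R {0,2} E" using res_of E(2) by simp
  have h1: "coxeq k m (\<delta> C E') (0 # \<delta> C' E')" by (rule STEP0[OF vv C(1) C'(1) eC E'(1)])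
  have "E' \<in> R {1,2} C'" using E'(1) res_of[OF _ C'(1)] by simp
  then obtain c where c: "set c \<subseteq> {1,2}" "coxeq k m (\<delta> C' E') c" by (auto simp: res_mem)
  have "E \<in> R {1,2} C" using E(1) res_of[OF _ C(1)] by simp
  then obtain a where a: "set a \<subseteq> {1,2}" "coxeq k m (\<delta> C E) a" by (auto simp: res_mem)
  have "E' \<in> R {0,2} E" using E'(2) uF by simp
  then obtain h where h: "set h \<subseteq> {0,2}" "coxeq k m (\<delta> E E') h" by (auto simp: res_mem)
  obtain t where t: "set t \<subseteq> {0,2}" "coxeq k m (\<delta> C E') (\<delta> C E @ t)"
    using LEML[OF h(1) _ h(2), of C] by auto
  have "coxeq k m (0 # c) (0 # \<delta> C' E')" using cx_app[OF cx_refl cx_sym[OF c(2)], of "[0]"] by simp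
  also have "coxeq k m \<dots> (\<delta> C E')" using cx_sym[OF h1] .
  also have "coxeq k m \<dots> (\<delta> C E @ t)" using t(2) .
  also have "coxeq k m \<dots> (a @ t)" using cx_app[OF a(2) cx_refl] .
  finally have "coxeq k m (0 # c) (a @ t)" .
  from G5[OF a(1) c(1) t(1) this k m]
  have cases: "coxeq k m a [] \<or> coxeq k m a [1] \<or> coxeq k m a [2] \<or> coxeq k m a [1,2]" .
  have ne: "R {0,1} C \<inter> R {0,2} E \<noteq> {}"
  proof -
    from cases show ?thesis
    proof (elim disjE)
      assume "coxeq k m a []"
      then have "E \<in> R {0,1} C" using memI[of "[]" "{0,1}" C E] cx_trans[OF a(2)] by auto
      then show ?thesis using res_self[of E] by auto
    next
      assume "coxeq k m a [1]"
      then have "E \<in> R {0,1} C" using a(2) by (auto intro!: memI[of "[1]"] intro: cx_trans)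
      then show ?thesis using res_self[of E] by auto
    next
      assume "coxeq k m a [2]"
      then have "coxeq k m (\<delta> C E) [2]" using a(2) by (rule cx_trans[rotated])
      then have "C \<in> R {0,2} E" using memI1[OF SYM1] by simp
      then show ?thesis using res_self[of C] by auto
    next
      assume aa: "coxeq k m a [1,2]"
      obtain X where X: "coxeq k m (\<delta> X C) [1]" "coxeq k m (\<delta> X E) (1 # \<delta> C E)"
        using a4[of 1] by auto
      have "coxeq k m (1 # \<delta> C E) (1 # [1,2])"
        using cx_app[OF cx_refl cx_trans[OF a(2) aa], of "[1]"] by simp
      also have "coxeq k m (1 # [1,2]) [2]" using cx_ss[of 1 k m "[]" "[2]"] by simp
      finally have "coxeq k m (\<delta> X E) [2]" using X(2) by (meson cx_trans)
      then have "X \<in> R {0,2} E" using memI1[OF SYM1] by simp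
      moreover have "X \<in> R {0,1} C" using memI1[OF SYM1[OF X(1)]] by simp
      ultimately show ?thesis by auto
    qed
  qed
  have neq: "R {0,1} C \<noteq> R {0,2} E"
  proof
    assume eq: "R {0,1} C = R {0,2} E"
    obtain Y where Y: "coxeq k m (\<delta> Y C) [1]" using a4[of 1 C C] by auto
    have "Y \<in> R {0,1} C" using memI1[OF SYM1[OF Y]] by simp
    moreover have "C \<in> R {0,1} C" by (rule res_self)
    ultimately have "Y \<in> R {0,2} E" "C \<in> R {0,2} E" using eq by auto
    then have "Y \<in> R {0,2} C" using res_of[of "{0,2}" C E] by simp
    then obtain g where g: "set g \<subseteq> {0,2}" "coxeq k m (\<delta> C Y) g" by (auto simp: res_mem)
    have "coxeq k m [1] g" using cx_trans[OF cx_sym[OF SYM1[OF Y]] g(2)] .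
    with G4[OF g(1)] k m show False by simp
  qed
  show ?thesis using ne neq wB uF by simp
qed

end



theorem corollary5p4:
  fixes \<delta> :: "'c \<Rightarrow> 'c \<Rightarrow> nat list" and k m :: nat and v v' w :: "'c set"
  assumes "building k m \<delta>" and "k \<ge> 3" and "m \<ge> 6"
    and "vertex_of_type k m \<delta> typek v" and "vertex_of_type k m \<delta> typek v'" and "v \<noteq> v'"
    and "vertex_of_type k m \<delta> type2 w"
    and "adjacent v w" and "adjacent v' w"
  shows "(\<forall>w'. vertex_of_type k m \<delta> type2 w' \<and> adjacent v w' \<and> adjacent v' w' \<longrightarrow> w' = w)
       \<and> (\<forall>u. vertex_of_type k m \<delta> typem u \<and> adjacent v u \<and> adjacent v' u \<longrightarrow> adjacent w u)"
proof -
  interpret bld k m \<delta> by (rule bld.intro) (rule assms(1))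
  have k3: "3 \<le> k" and m3: "3 \<le> m" using assms(2,3) by auto
  obtain A where vA: "v = residue k m \<delta> {1,2} A" using assms(4) unfolding vertex_of_type_def by blast
  obtain A' where vA': "v' = residue k m \<delta> {1,2} A'" using assms(5) unfolding vertex_of_type_def by blast
  obtain B where wB: "w = residue k m \<delta> {0,1} B" using assms(7) unfolding vertex_of_type_def by blast
  have vv: "residue k m \<delta> {1,2} A \<noteq> residue k m \<delta> {1,2} A'" using assms(6) vA vA' by simp
  obtain C where C: "C \<in> v" "C \<in> w" using assms(8) unfolding adjacent_def by blast
  obtain C1 where C1: "C1 \<in> v'" "C1 \<in> w" using assms(9) unfolding adjacent_def by blast
  obtain C' where C': "C' \<in> residue k m \<delta> {1,2} A'" "C' \<in> residue k m \<delta> {0,1} B" "coxeq k m (\<delta> C C') [0]"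
    using PICK[OF vv, of C B C1] C C1 vA vA' wB by auto
  show ?thesis
  proof (intro conjI allI impI)
    fix w' assume h: "vertex_of_type k m \<delta> type2 w' \<and> adjacent v w' \<and> adjacent v' w'"
    obtain B' where wB': "w' = residue k m \<delta> {0,1} B'" using h unfolding vertex_of_type_def by blast
    obtain D where D: "D \<in> v" "D \<in> w'" using h unfolding adjacent_def by blast
    obtain D1 where D1: "D1 \<in> v'" "D1 \<in> w'" using h unfolding adjacent_def by blast
    obtain D' where D': "D' \<in> residue k m \<delta> {1,2} A'" "D' \<in> residue k m \<delta> {0,1} B'" "coxeq k m (\<delta> D D') [0]"
      using PICK[OF vv, of D B' D1] D D1 vA vA' wB' by auto
    have "residue k m \<delta> {0,1} B' = residue k m \<delta> {0,1} B"
      using CLAIM1[OF k3 m3 vv _ _ C'(1,2,3) _ _ D'(1,2,3)] C D vA wB wB' by auto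
    then show "w' = w" using wB wB' by simp
  next
    fix u assume h: "vertex_of_type k m \<delta> typem u \<and> adjacent v u \<and> adjacent v' u"
    obtain F where uF: "u = residue k m \<delta> {0,2} F" using h unfolding vertex_of_type_def by blast
    obtain E where E: "E \<in> v" "E \<in> u" using h unfolding adjacent_def by blast
    obtain E' where E': "E' \<in> v'" "E' \<in> u" using h unfolding adjacent_def by blast
    have "residue k m \<delta> {0,1} B \<inter> residue k m \<delta> {0,2} F \<noteq> {} \<and> residue k m \<delta> {0,1} B \<noteq> residue k m \<delta> {0,2} F"
      using CLAIM2[OF k3 m3 vv _ _ C'(1,2,3)] C E E' vA vA' wB uF by auto
    then show "adjacent w u" unfolding adjacent_def using wB uF by simp
  qed
qed


end
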